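(* Let $X=\mathbb Z$, $m\equiv1$, $b(x,y)=1$ if $|x-y|=1$ and $b(x,y)=0$ otherwise, and $D=2\mathbb Z$. Then for every $T>0$, $r\in[1,\infty]$ and $K\ge0$ the linear control problem $(H,D)$ is not $(0,T,r,K)$-controllable.
   Context: $H$ is the weighted Laplacian on $\ell_2(X,m)$, $Hf(x)=\frac1{m(x)}\sum_yb(x,y)(f(x)-f(y))$ (here $Hf(x)=2f(x)-f(x-1)-f(x+1)$), $S_t=e^{-tH}$. The control problem $(H,D)$ is $\dot f=-Hf+\mathbf 1_Du$, $f(0)=f_0\in\ell_2(X,m)$, where $\mathbf 1_D$ is extension by zero from $\ell_2(D,m|_D)$, with mild solution $f(t)=S_tf_0+\int_0^tS_{t-\tau}\mathbf 1_Du(\tau)d\tau$; it is $(\alpha,T,r,K)$-controllable if for every $f_0$ there is $u\in L_r((0,T);\ell_2(D,m|_D))$ with $\|u\|_{L_r((0,T);\ell_2(D,m|_D))}\le K\|f_0\|$ and $\|f(T)\|\le\alpha\|f_0\|$. *)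

theory Defs
  imports "HOL-Analysis.Analysis"
begin

definition l2 :: "(int \<Rightarrow> real) set" where
  "l2 = {f. (\<lambda>x. (f x)\<^sup>2) summable_on UNIV}"

definition l2norm :: "(int \<Rightarrow> real) \<Rightarrow> real" where
  "l2norm f = sqrt (infsum (\<lambda>x. (f x)\<^sup>2) UNIV)"

text \<open>The weighted Laplacian H for m = 1, b = nearest-neighbour weights on Z.\<close>
definition Hop :: "(int \<Rightarrow> real) \<Rightarrow> int \<Rightarrow> real" where
  "Hop f x = 2 * f x - f (x - 1) - f (x + 1)"

text \<open>S_t = exp(-tH) (H is bounded), evaluated coordinatewise from the norm-convergent
  exponential series.\<close>
definition S :: "real \<Rightarrow> (int \<Rightarrow> real) \<Rightarrow> int \<Rightarrow> real" where
  "S t f x = (\<Sum>n. (-t) ^ n / fact n * (Hop ^^ n) f x)"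

definition D :: "int set" where "D = {x. even x}"

definition extD :: "(int \<Rightarrow> real) \<Rightarrow> int \<Rightarrow> real" where
  "extD g x = (if x \<in> D then g x else 0)"

text \<open>Mild solution at time T, evaluated coordinatewise (evaluation at a point is a
  continuous linear functional, so it commutes with the Bochner integral).\<close>
definition mild :: "real \<Rightarrow> (int \<Rightarrow> real) \<Rightarrow> (real \<Rightarrow> int \<Rightarrow> real) \<Rightarrow> int \<Rightarrow> real" where
  "mild T f0 u x = S T f0 x + (LINT \<tau>:{0..T}|lborel. S (T - \<tau>) (extD (u \<tau>)) x)"

text \<open>u is a (strongly = weakly, by separability) measurable map (0,T) -> l2(D).\<close>
definition admissible :: "real \<Rightarrow> (real \<Rightarrow> int \<Rightarrow> real) \<Rightarrow> bool" where
  "admissible T u \<longleftrightarrow>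
     (\<forall>x. (\<lambda>t. u t x) \<in> borel_measurable (restrict_space lborel {0<..<T})) \<and>
     (AE t in lborel. t \<in> {0<..<T} \<longrightarrow> extD (u t) \<in> l2)"

text \<open>\<parallel>u\<parallel>_{L_r((0,T); l2(D))} \<le> C, for r \<in> [1,\<infinity>] (r = top means r = \<infinity>).\<close>
definition Lr_bound :: "real \<Rightarrow> ennreal \<Rightarrow> (real \<Rightarrow> int \<Rightarrow> real) \<Rightarrow> real \<Rightarrow> bool" where
  "Lr_bound T r u C \<longleftrightarrow>
     (if r = top then (AE t in lborel. t \<in> {0<..<T} \<longrightarrow> l2norm (extD (u t)) \<le> C)
      else (\<integral>\<^sup>+ t \<in> {0<..<T}. ennreal (l2norm (extD (u t)) powr enn2real r) \<partial>lborel)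
             \<le> ennreal (C powr enn2real r))"

definition controllable :: "real \<Rightarrow> real \<Rightarrow> ennreal \<Rightarrow> real \<Rightarrow> bool" where
  "controllable \<alpha> T r K \<longleftrightarrow>
     (\<forall>f0 \<in> l2. \<exists>u. admissible T u \<and> Lr_bound T r u (K * l2norm f0) \<and>
        mild T f0 u \<in> l2 \<and> l2norm (mild T f0 u) \<le> \<alpha> * l2norm f0)"

end

theory Submission
  imports Defs
begin


lemma Hop_funpow_Suc: "(Hop ^^ Suc n) f = Hop ((Hop ^^ n) f)" by simp

lemma Hop_bound:
  assumes "\<And>y. \<bar>h y\<bar> \<le> B"
  shows "\<bar>(Hop ^^ n) h x\<bar> \<le> 4 ^ n * B"
  using assms
proof (induction n arbitrary: x)
  case 0 then show ?case by simp
next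
  case (Suc n)
  have a: "\<bar>(Hop ^^ n) h y\<bar> \<le> 4 ^ n * B" for y using Suc by blast
  have "\<bar>(Hop ^^ Suc n) h x\<bar> = \<bar>2 * (Hop ^^ n) h x - (Hop ^^ n) h (x - 1) - (Hop ^^ n) h (x + 1)\<bar>"
    by (simp add: Hop_def)
  also have "\<dots> \<le> 2 * \<bar>(Hop ^^ n) h x\<bar> + \<bar>(Hop ^^ n) h (x - 1)\<bar> + \<bar>(Hop ^^ n) h (x + 1)\<bar>" by linarith
  also have "\<dots> \<le> 4 ^ Suc n * B" using a[of x] a[of "x-1"] a[of "x+1"] by simp
  finally show ?case .
qed

lemma Hop_support:
  assumes "\<And>y. M < \<bar>y\<bar> \<Longrightarrow> g y = 0"
  shows "M + int n < \<bar>y\<bar> \<Longrightarrow> (Hop ^^ n) g y = 0"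
proof (induction n arbitrary: y)
  case 0 then show ?case using assms by simp
next
  case (Suc n)
  have "M + int n < \<bar>y\<bar>" "M + int n < \<bar>y - 1\<bar>" "M + int n < \<bar>y + 1\<bar>" using Suc.prems by auto
  then show ?case using Suc.IH by (simp add: Hop_def)
qed

lemma sum_shift1:
  fixes b :: "int \<Rightarrow> real"
  shows "(\<Sum>x\<in>{-L..L}. b (x + 1)) = (\<Sum>y\<in>{-L+1..L+1}. b y)"
proof -
  have "(\<Sum>y\<in>{-L+1..L+1}. b y) = (\<Sum>x\<in>{-L..L}. b (x + 1))"
    by (rule sum.reindex_bij_witness[where j="\<lambda>y. y - 1" and i="\<lambda>x. x + 1"]) auto
  then show ?thesis by simp
qed

lemma sym1:
  fixes a h :: "int \<Rightarrow> real"
  assumes "\<And>y. L \<le> \<bar>y\<bar> \<Longrightarrow> a y = 0" and "0 \<le> L"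
  shows "(\<Sum>x\<in>{-L..L}. a x * Hop h x) = (\<Sum>x\<in>{-L..L}. Hop a x * h x)"
proof -
  have e1: "(\<Sum>x\<in>{-L..L}. a x * h (x - 1)) = (\<Sum>x\<in>{-L..L}. a (x + 1) * h x)"
  proof -
    have "(\<Sum>x\<in>{-L..L}. a (x + 1) * h x) = (\<Sum>x\<in>{-L..L}. a (x + 1) * h (x + 1 - 1))" by simp
    also have "\<dots> = (\<Sum>y\<in>{-L+1..L+1}. a y * h (y - 1))" by (rule sum_shift1)
    also have "\<dots> = (\<Sum>y\<in>{-L..L}. a y * h (y - 1))"
    proof -
      have s1: "(\<Sum>y\<in>{-L+1..L+1}. a y * h (y - 1)) = (\<Sum>y\<in>{-L..L+1}. a y * h (y - 1))"
        by (rule sum.mono_neutral_left) (use assms in auto)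
      have s2: "(\<Sum>y\<in>{-L..L}. a y * h (y - 1)) = (\<Sum>y\<in>{-L..L+1}. a y * h (y - 1))"
        by (rule sum.mono_neutral_left) (use assms in auto)
      show ?thesis using s1 s2 by simp
    qed
    finally show ?thesis by simp
  qed
  have e2: "(\<Sum>x\<in>{-L..L}. a x * h (x + 1)) = (\<Sum>x\<in>{-L..L}. a (x - 1) * h x)"
  proof -
    have "(\<Sum>x\<in>{-L..L}. a x * h (x + 1)) = (\<Sum>y\<in>{-L+1..L+1}. a (y - 1) * h y)"
      using sum_shift1[of "\<lambda>y. a (y - 1) * h y" L] by simp
    also have "\<dots> = (\<Sum>y\<in>{-L..L}. a (y - 1) * h y)"
    proof -
      have s1: "(\<Sum>y\<in>{-L+1..L+1}. a (y - 1) * h y) = (\<Sum>y\<in>{-L..L+1}. a (y - 1) * h y)"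
        by (rule sum.mono_neutral_left) (use assms in auto)
      have s2: "(\<Sum>y\<in>{-L..L}. a (y - 1) * h y) = (\<Sum>y\<in>{-L..L+1}. a (y - 1) * h y)"
        by (rule sum.mono_neutral_left) (use assms in auto)
      show ?thesis using s1 s2 by simp
    qed
    finally show ?thesis .
  qed
  have "(\<Sum>x\<in>{-L..L}. a x * Hop h x) = 2 * (\<Sum>x\<in>{-L..L}. a x * h x) - (\<Sum>x\<in>{-L..L}. a x * h (x - 1)) - (\<Sum>x\<in>{-L..L}. a x * h (x + 1))"
    by (simp add: Hop_def algebra_simps sum_subtractf sum_distrib_left sum.distrib)
  also have "\<dots> = 2 * (\<Sum>x\<in>{-L..L}. a x * h x) - (\<Sum>x\<in>{-L..L}. a (x + 1) * h x) - (\<Sum>x\<in>{-L..L}. a (x - 1) * h x)"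
    using e1 e2 by simp
  also have "\<dots> = (\<Sum>x\<in>{-L..L}. Hop a x * h x)"
    by (simp add: Hop_def algebra_simps sum_subtractf sum_distrib_left sum.distrib)
  finally show ?thesis .
qed

lemma symn:
  fixes g h :: "int \<Rightarrow> real"
  assumes "\<And>y. M < \<bar>y\<bar> \<Longrightarrow> g y = 0" and "0 \<le> M" and "M + int n \<le> L"
  shows "(\<Sum>x\<in>{-L..L}. g x * (Hop ^^ n) h x) = (\<Sum>x\<in>{-L..L}. (Hop ^^ n) g x * h x)"
  using assms(3)
proof (induction n arbitrary: h)
  case 0 then show ?case by simp
next
  case (Suc n)
  have "(Hop ^^ Suc n) h = (Hop ^^ n) (Hop h)" by (simp add: funpow_Suc_right del: funpow.simps)
  then have "(\<Sum>x\<in>{-L..L}. g x * (Hop ^^ Suc n) h x) = (\<Sum>x\<in>{-L..L}. (Hop ^^ n) g x * Hop h x)"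
    using Suc by simp
  also have "\<dots> = (\<Sum>x\<in>{-L..L}. Hop ((Hop ^^ n) g) x * h x)"
    by (rule sym1) (use Hop_support[OF assms(1)] Suc.prems assms(2) in auto)
  finally show ?case by simp
qed



definition chi :: "int \<Rightarrow> real" where
  "chi x = (if x mod 4 = 1 then 1 else if x mod 4 = 3 then -1 else 0)"

definition gN :: "nat \<Rightarrow> int \<Rightarrow> real" where
  "gN N x = chi x * max 0 (real N - \<bar>real_of_int x\<bar>)"

lemma gN_support: "int N < \<bar>y\<bar> \<Longrightarrow> gN N y = 0"
  by (simp add: gN_def)

lemma gN_even: "even x \<Longrightarrow> gN N x = 0"
proof -
  assume "even x"
  then have "x mod 4 \<noteq> 1 \<and> x mod 4 \<noteq> 3" by presburger
  then show ?thesis by (simp add: gN_def chi_def)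
qed

lemma gN_one: "1 \<le> N \<Longrightarrow> gN N 1 = real N - 1"
  by (simp add: gN_def chi_def)

lemma gN_err: "\<bar>Hop (gN N) x - 2 * gN N x\<bar> \<le> 2"
proof (cases "even x")
  case False
  then have "even (x - 1)" "even (x + 1)" by auto
  then show ?thesis using gN_even by (simp add: Hop_def)
next
  case True
  have c: "chi (x - 1) = - chi (x + 1)" "\<bar>chi (x + 1)\<bar> \<le> 1"
  proof -
    have "(x - 1) mod 4 = 1 \<and> (x + 1) mod 4 = 3 \<or> (x - 1) mod 4 = 3 \<and> (x + 1) mod 4 = 1"
      using True by presburger
    then show "chi (x - 1) = - chi (x + 1)" "\<bar>chi (x + 1)\<bar> \<le> 1" by (auto simp: chi_def)
  qed
  let ?p = "\<lambda>y::int. max 0 (real N - \<bar>real_of_int y\<bar>)"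
  have lip: "\<bar>?p (x + 1) - ?p (x - 1)\<bar> \<le> 2" by (simp add: abs_if max_def)
  have "Hop (gN N) x - 2 * gN N x = - chi (x + 1) * (?p (x + 1) - ?p (x - 1))"
    using c True gN_even[of x N] by (simp add: Hop_def gN_def algebra_simps)
  also have "\<bar>\<dots>\<bar> \<le> 1 * 2" unfolding abs_mult abs_minus_cancel
    by (rule mult_mono) (use c lip in auto)
  finally show ?thesis by simp
qed

lemma Hop_err:
  assumes "\<And>x. \<bar>Hop g x - 2 * g x\<bar> \<le> E"
  shows "\<bar>(Hop ^^ n) g x - 2 ^ n * g x\<bar> \<le> E * 5 ^ n"
proof (induction n arbitrary: x)
  case 0 then show ?case using assms[of x] by simp
next
  case (Suc n)
  define r where "r y = (Hop ^^ n) g y - 2 ^ n * g y" for y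
  have E: "0 \<le> E" using assms[of 0] by linarith
  have rb: "\<bar>r y\<bar> \<le> E * 5 ^ n" for y using Suc r_def by simp
  have eq: "(Hop ^^ Suc n) g x - 2 ^ Suc n * g x = (2 * r x - r (x - 1) - r (x + 1)) + 2 ^ n * (Hop g x - 2 * g x)"
    by (simp add: r_def Hop_def algebra_simps)
  have "\<bar>2 ^ n * (Hop g x - 2 * g x)\<bar> \<le> 2 ^ n * E"
    unfolding abs_mult by (simp add: mult_left_mono assms)
  also have "\<dots> \<le> 5 ^ n * E" by (rule mult_right_mono) (use E power_mono[of "2::real" 5 n] in auto)
  finally have b2: "\<bar>2 ^ n * (Hop g x - 2 * g x)\<bar> \<le> 5 ^ n * E" .
  have "\<bar>(Hop ^^ Suc n) g x - 2 ^ Suc n * g x\<bar> \<le> 2 * \<bar>r x\<bar> + \<bar>r (x - 1)\<bar> + \<bar>r (x + 1)\<bar> + \<bar>2 ^ n * (Hop g x - 2 * g x)\<bar>"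
    unfolding eq by linarith
  also have "\<dots> \<le> E * 5 ^ Suc n" using rb[of x] rb[of "x-1"] rb[of "x+1"] b2 by (simp add: algebra_simps)
  finally show ?case .
qed

lemma gN_Hop_err: "\<bar>(Hop ^^ n) (gN N) x - 2 ^ n * gN N x\<bar> \<le> 2 * 5 ^ n"
  by (rule Hop_err) (rule gN_err)



lemma exp_sums_real: "(\<lambda>n. x ^ n / fact n) sums exp (x::real)"
  using exp_converges[of x] by (simp add: divide_inverse mult.commute)

lemma exp_bound_series:
  fixes a :: "nat \<Rightarrow> real"
  assumes "\<And>n. \<bar>a n\<bar> \<le> K * (z ^ n / fact n)"
  shows "summable a \<and> \<bar>suminf a\<bar> \<le> K * exp z"
proof -
  have sb: "(\<lambda>n. K * (z ^ n / fact n)) sums (K * exp z)"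
    using sums_mult[OF exp_sums_real] by blast
  have sa: "summable (\<lambda>n. \<bar>a n\<bar>)"
    by (rule summable_comparison_test[OF _ sums_summable[OF sb]]) (use assms in auto)
  have "\<bar>suminf a\<bar> \<le> (\<Sum>n. \<bar>a n\<bar>)" by (rule summable_rabs[OF sa])
  also have "\<dots> \<le> K * exp z"
    using suminf_le[OF assms sa sums_summable[OF sb]] sums_unique[OF sb] by simp
  finally show ?thesis using summable_rabs_cancel[OF sa] by simp
qed

lemma S_bound:
  assumes "\<And>y. \<bar>h y\<bar> \<le> B"
  shows "summable (\<lambda>n. (-s) ^ n / fact n * (Hop ^^ n) h x) \<and> \<bar>S s h x\<bar> \<le> B * exp (4 * \<bar>s\<bar>)"
proof -
  have "\<bar>(-s) ^ n / fact n * (Hop ^^ n) h x\<bar> \<le> B * ((4 * \<bar>s\<bar>) ^ n / fact n)" for n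
  proof -
    have "\<bar>(-s) ^ n / fact n * (Hop ^^ n) h x\<bar> = \<bar>s\<bar> ^ n / fact n * \<bar>(Hop ^^ n) h x\<bar>"
      by (simp add: abs_mult power_abs)
    also have "\<dots> \<le> \<bar>s\<bar> ^ n / fact n * (4 ^ n * B)"
      by (rule mult_left_mono[OF Hop_bound[OF assms]]) simp
    also have "\<dots> = B * ((4 * \<bar>s\<bar>) ^ n / fact n)" by (simp add: power_mult_distrib)
    finally show ?thesis .
  qed
  from exp_bound_series[OF this] show ?thesis by (simp add: S_def)
qed

lemma pairing:
  fixes h :: "int \<Rightarrow> real" and N :: nat
  assumes hb: "\<And>y. \<bar>h y\<bar> \<le> B"
  defines "M \<equiv> int N"
  shows "(\<Sum>x\<in>{-M..M}. gN N x * S s h x) =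
    (\<Sum>n. (-s) ^ n / fact n * (\<Sum>y\<in>{-(M + int n)..M + int n}. (Hop ^^ n) (gN N) y * h y))"
proof -
  have sm: "summable (\<lambda>n. (-s) ^ n / fact n * (Hop ^^ n) h x)" for x using S_bound[of h B, OF hb] by blast
  have "(\<Sum>x\<in>{-M..M}. gN N x * S s h x) = (\<Sum>x\<in>{-M..M}. \<Sum>n. gN N x * ((-s) ^ n / fact n * (Hop ^^ n) h x))"
    unfolding S_def by (intro sum.cong refl suminf_mult[symmetric] sm)
  also have "\<dots> = (\<Sum>n. \<Sum>x\<in>{-M..M}. gN N x * ((-s) ^ n / fact n * (Hop ^^ n) h x))"
    by (rule suminf_sum[symmetric]) (intro summable_mult sm)
  also have "\<dots> = (\<Sum>n. (-s) ^ n / fact n * (\<Sum>y\<in>{-(M + int n)..M + int n}. (Hop ^^ n) (gN N) y * h y))"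
  proof (rule suminf_cong)
    fix n
    have "(\<Sum>x\<in>{-M..M}. gN N x * ((-s) ^ n / fact n * (Hop ^^ n) h x)) =
       (-s) ^ n / fact n * (\<Sum>x\<in>{-M..M}. gN N x * (Hop ^^ n) h x)"
      by (simp add: sum_distrib_left algebra_simps)
    also have "(\<Sum>x\<in>{-M..M}. gN N x * (Hop ^^ n) h x) = (\<Sum>x\<in>{-(M + int n)..M + int n}. gN N x * (Hop ^^ n) h x)"
      by (rule sum.mono_neutral_left) (auto simp: M_def gN_support)
    also have "\<dots> = (\<Sum>y\<in>{-(M + int n)..M + int n}. (Hop ^^ n) (gN N) y * h y)"
      by (rule symn[where M=M]) (auto simp: M_def gN_support)
    finally show "(\<Sum>x\<in>{-M..M}. gN N x * ((-s) ^ n / fact n * (Hop ^^ n) h x)) =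
       (-s) ^ n / fact n * (\<Sum>y\<in>{-(M + int n)..M + int n}. (Hop ^^ n) (gN N) y * h y)" .
  qed
  finally show ?thesis .
qed



definition delta1 :: "int \<Rightarrow> real" where "delta1 y = (if y = 1 then 1 else 0)"

lemma pairing_delta:
  fixes N :: nat and T :: real
  assumes "1 \<le> N" "0 \<le> T"
  shows "(\<Sum>x\<in>{-int N..int N}. gN N x * S T delta1 x) \<ge> (real N - 1) * exp (-2 * T) - 2 * exp (5 * T)"
proof -
  define M where "M = int N"
  have db: "\<bar>delta1 y\<bar> \<le> 1" for y by (simp add: delta1_def)
  have inner: "(\<Sum>y\<in>{-(M + int n)..M + int n}. (Hop ^^ n) (gN N) y * delta1 y) = (Hop ^^ n) (gN N) 1" for n
  proof -
    have "1 \<in> {-(M + int n)..M + int n}" using assms by (auto simp: M_def)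
    have "(\<Sum>y\<in>{-(M + int n)..M + int n}. (Hop ^^ n) (gN N) y * delta1 y) =
      (\<Sum>y\<in>{-(M + int n)..M + int n}. if y = 1 then (Hop ^^ n) (gN N) 1 else 0)"
      by (rule sum.cong) (auto simp: delta1_def)
    with \<open>1 \<in> _\<close> show ?thesis by simp
  qed
  define r where "r n = (Hop ^^ n) (gN N) 1 - 2 ^ n * gN N 1" for n
  have rb: "\<bar>(-T) ^ n / fact n * r n\<bar> \<le> 2 * ((5 * T) ^ n / fact n)" for n
  proof -
    have "\<bar>(-T) ^ n / fact n * r n\<bar> = T ^ n / fact n * \<bar>r n\<bar>" using assms by (simp add: abs_mult power_abs)
    also have "\<dots> \<le> T ^ n / fact n * (2 * 5 ^ n)"
      by (rule mult_left_mono) (use gN_Hop_err[of n N 1] assms in \<open>auto simp: r_def\<close>)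
    also have "\<dots> = 2 * ((5 * T) ^ n / fact n)" by (simp add: power_mult_distrib)
    finally show ?thesis .
  qed
  note R = exp_bound_series[OF rb]
  have s1: "(\<lambda>n. (-T) ^ n / fact n * (2 ^ n * gN N 1)) sums ((real N - 1) * exp (-2 * T))"
  proof -
    have "(\<lambda>n. (real N - 1) * ((-2 * T) ^ n / fact n)) sums ((real N - 1) * exp (-2 * T))"
      by (rule sums_mult[OF exp_sums_real])
    moreover have "(-T) ^ n / fact n * (2 ^ n * gN N 1) = (real N - 1) * ((-2 * T) ^ n / fact n)" for n
    proof -
      have "(-2 * T) ^ n = 2 ^ n * (-T) ^ n" by (metis mult_minus_left mult_minus_right power_mult_distrib)
      then show ?thesis by (simp add: gN_one[OF assms(1)] field_simps)
    qed
    ultimately show ?thesis by simp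
  qed
  have "(\<Sum>x\<in>{-int N..int N}. gN N x * S T delta1 x) = (\<Sum>n. (-T) ^ n / fact n * (Hop ^^ n) (gN N) 1)"
    using pairing[of delta1 1 N T, OF db] inner by (simp add: M_def)
  also have "\<dots> = (\<Sum>n. (-T) ^ n / fact n * (2 ^ n * gN N 1) + (-T) ^ n / fact n * r n)"
    by (simp add: r_def algebra_simps)
  also have "\<dots> = (real N - 1) * exp (-2 * T) + (\<Sum>n. (-T) ^ n / fact n * r n)"
    using suminf_add[OF sums_summable[OF s1] conjunct1[OF R]] sums_unique[OF s1] by simp
  also have "\<dots> \<ge> (real N - 1) * exp (-2 * T) - 2 * exp (5 * T)" using conjunct2[OF R] by linarith
  finally show ?thesis .
qed

lemma pow4_ge: "1 + 2 * real n \<le> 4 ^ n"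
proof (induction n)
  case (Suc n) then show ?case by simp
qed simp

lemma pairing_D:
  fixes N :: nat and h :: "int \<Rightarrow> real"
  assumes hb: "\<And>y. \<bar>h y\<bar> \<le> B" and hodd: "\<And>y. odd y \<Longrightarrow> h y = 0"
    and hL: "\<And>F. finite F \<Longrightarrow> (\<Sum>y\<in>F. (h y)\<^sup>2) \<le> L\<^sup>2" and L: "0 \<le> L"
  shows "\<bar>\<Sum>x\<in>{-int N..int N}. gN N x * S s h x\<bar> \<le> (2 * sqrt (2 * real N + 1) * L) * exp (10 * \<bar>s\<bar>)"
proof -
  define M where "M = int N"
  define c where "c = sqrt (2 * real N + 1)"
  have c0: "0 \<le> c" by (simp add: c_def)
  have tb: "\<bar>\<Sum>y\<in>{-(M + int n)..M + int n}. (Hop ^^ n) (gN N) y * h y\<bar> \<le> 2 * c * L * 10 ^ n" for n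
  proof -
    let ?W = "{-(M + int n)..M + int n}"
    have "(\<Sum>y\<in>?W. (Hop ^^ n) (gN N) y * h y) = (\<Sum>y\<in>?W. ((Hop ^^ n) (gN N) y - 2 ^ n * gN N y) * h y)"
    proof (rule sum.cong[OF refl])
      fix y
      have "gN N y * h y = 0" by (cases "even y") (auto simp: gN_even hodd)
      then show "(Hop ^^ n) (gN N) y * h y = ((Hop ^^ n) (gN N) y - 2 ^ n * gN N y) * h y"
        by (simp add: algebra_simps)
    qed
    also have "\<bar>\<dots>\<bar> \<le> (\<Sum>y\<in>?W. \<bar>((Hop ^^ n) (gN N) y - 2 ^ n * gN N y) * h y\<bar>)" by (rule sum_abs)
    also have "\<dots> \<le> (\<Sum>y\<in>?W. 2 * 5 ^ n * \<bar>h y\<bar>)"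
      by (rule sum_mono) (simp add: abs_mult mult_right_mono gN_Hop_err)
    also have "\<dots> = 2 * 5 ^ n * (\<Sum>y\<in>?W. \<bar>h y\<bar>)" by (simp add: sum_distrib_left)
    also have "(\<Sum>y\<in>?W. \<bar>h y\<bar>) \<le> c * 2 ^ n * L"
    proof -
      have cs: "(\<Sum>y\<in>?W. 1 * \<bar>h y\<bar>)\<^sup>2 \<le> (\<Sum>y\<in>?W. 1\<^sup>2) * (\<Sum>y\<in>?W. \<bar>h y\<bar>\<^sup>2)"
        by (rule Cauchy_Schwarz_ineq_sum)
      have e1: "(\<Sum>y\<in>?W. (1::real)\<^sup>2) * (\<Sum>y\<in>?W. \<bar>h y\<bar>\<^sup>2) = real (card ?W) * (\<Sum>y\<in>?W. (h y)\<^sup>2)"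
        by simp
      have e2: "real (card ?W) * (\<Sum>y\<in>?W. (h y)\<^sup>2) \<le> real (card ?W) * L\<^sup>2"
        by (rule mult_left_mono) (use hL[of ?W] in auto)
      have e3: "real (card ?W) = 2 * real N + 1 + 2 * real n" by (simp add: M_def)
      have e5: "2 * real N + 1 + 2 * real n \<le> (2 * real N + 1) * 4 ^ n"
      proof -
        have "real N * 1 \<le> real N * 4 ^ n" by (rule mult_left_mono) auto
        then show ?thesis using pow4_ge[of n] by (simp add: algebra_simps)
      qed
      have e6: "(2 * real N + 1) * 4 ^ n * L\<^sup>2 = (c * 2 ^ n * L)\<^sup>2"
      proof -
        have e4: "((2::real) ^ n)\<^sup>2 = 4 ^ n"
          by (induction n) (simp_all add: power2_eq_square algebra_simps)
        have c2: "c\<^sup>2 = 2 * real N + 1" unfolding c_def by simp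
        have "(c * 2 ^ n * L)\<^sup>2 = c\<^sup>2 * ((2::real) ^ n)\<^sup>2 * L\<^sup>2" by (simp add: power_mult_distrib)
        then show ?thesis using e4 c2 by simp
      qed
      have e7: "real (card ?W) * L\<^sup>2 \<le> (2 * real N + 1) * 4 ^ n * L\<^sup>2"
        unfolding e3 by (rule mult_right_mono[OF e5]) simp
      have cs': "(\<Sum>y\<in>?W. \<bar>h y\<bar>)\<^sup>2 \<le> (\<Sum>y\<in>?W. (1::real)\<^sup>2) * (\<Sum>y\<in>?W. \<bar>h y\<bar>\<^sup>2)"
        using cs by simp
      have "(\<Sum>y\<in>?W. \<bar>h y\<bar>)\<^sup>2 \<le> (c * 2 ^ n * L)\<^sup>2"
        using cs' e1 e2 e7 e6 by linarith
      then show ?thesis by (rule power2_le_imp_le) (use c0 L in auto)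
    qed
    then have "2 * 5 ^ n * (\<Sum>y\<in>?W. \<bar>h y\<bar>) \<le> 2 * 5 ^ n * (c * 2 ^ n * L)" by simp
    also have "\<dots> = 2 * c * L * 10 ^ n"
    proof -
      have "(10::real) ^ n = 5 ^ n * 2 ^ n" by (induction n) simp_all
      then show ?thesis by (simp add: algebra_simps)
    qed
    finally show ?thesis .
  qed
  have "\<bar>(-s) ^ n / fact n * (\<Sum>y\<in>{-(M + int n)..M + int n}. (Hop ^^ n) (gN N) y * h y)\<bar>
        \<le> (2 * c * L) * ((10 * \<bar>s\<bar>) ^ n / fact n)" for n
  proof -
    have "\<bar>(-s) ^ n / fact n * (\<Sum>y\<in>{-(M + int n)..M + int n}. (Hop ^^ n) (gN N) y * h y)\<bar>
       = \<bar>s\<bar> ^ n / fact n * \<bar>\<Sum>y\<in>{-(M + int n)..M + int n}. (Hop ^^ n) (gN N) y * h y\<bar>"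
      by (simp add: abs_mult power_abs)
    also have "\<dots> \<le> \<bar>s\<bar> ^ n / fact n * (2 * c * L * 10 ^ n)" by (rule mult_left_mono[OF tb]) simp
    also have "\<dots> = (2 * c * L) * ((10 * \<bar>s\<bar>) ^ n / fact n)" by (simp add: power_mult_distrib)
    finally show ?thesis .
  qed
  from exp_bound_series[OF this] pairing[of h B N s, OF hb]
  show ?thesis by (simp add: M_def c_def)
qed



lemma l2norm_nonneg: "0 \<le> l2norm f"
  unfolding l2norm_def using infsum_nonneg[of UNIV "\<lambda>x. (f x)\<^sup>2"] by simp

lemma l2_finite_le:
  assumes "f \<in> l2" "finite F"
  shows "(\<Sum>y\<in>F. (f y)\<^sup>2) \<le> (l2norm f)\<^sup>2"
proof -
  have s: "(\<lambda>x. (f x)\<^sup>2) summable_on UNIV" using assms(1) by (simp add: l2_def)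
  have "(\<Sum>y\<in>F. (f y)\<^sup>2) = infsum (\<lambda>x. (f x)\<^sup>2) F" using assms(2) by simp
  also have "\<dots> \<le> infsum (\<lambda>x. (f x)\<^sup>2) UNIV"
    by (rule infsum_mono_neutral) (use assms(2) s in auto)
  also have "\<dots> = (l2norm f)\<^sup>2"
    unfolding l2norm_def using infsum_nonneg[of UNIV "\<lambda>x. (f x)\<^sup>2"] by simp
  finally show ?thesis .
qed

lemma l2_point_le:
  assumes "f \<in> l2"
  shows "\<bar>f y\<bar> \<le> l2norm f"
proof -
  have "(f y)\<^sup>2 \<le> (l2norm f)\<^sup>2" using l2_finite_le[OF assms, of "{y}"] by simp
  moreover have "0 \<le> l2norm f" by (rule l2norm_nonneg)
  ultimately show ?thesis using abs_le_square_iff by (metis abs_of_nonneg)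
qed


lemma delta1_l2: "delta1 \<in> l2" and delta1_norm: "l2norm delta1 = 1"
proof -
  have h: "((\<lambda>x. (delta1 x)\<^sup>2) has_sum 1) UNIV"
    by (rule has_sum_finite_neutralI[where B="{1}"]) (auto simp: delta1_def)
  then show "delta1 \<in> l2" unfolding l2_def summable_on_def by blast
  show "l2norm delta1 = 1" unfolding l2norm_def using infsumI[OF h] by simp
qed

lemma numeric:
  fixes a b :: real
  assumes "0 \<le> a" "0 \<le> b"
  shows "\<exists>N::nat. 1 \<le> N \<and> a + b * sqrt (2 * real N + 1) < real N - 1"
proof -
  define N where "N = nat \<lceil>(a + 2 * b + 2)\<^sup>2\<rceil>"
  define s where "s = sqrt (real N)"
  have Nge: "(a + 2 * b + 2)\<^sup>2 \<le> real N" unfolding N_def by linarith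
  have s0: "a + 2 * b + 2 \<le> s" unfolding s_def by (rule real_le_rsqrt[OF Nge])
  have ss: "s * s = real N" unfolding s_def by simp
  have s1: "1 \<le> s" using s0 assms by linarith
  have "1 * 1 \<le> s * s" by (rule mult_mono) (use s1 in auto)
  then have N1r: "1 \<le> real N" using ss by simp
  then have N1: "1 \<le> N" by simp
  have sq: "sqrt (2 * real N + 1) \<le> 2 * s"
  proof -
    have "2 * real N + 1 \<le> (2 * s)\<^sup>2" using ss N1r by (simp add: power2_eq_square algebra_simps)
    then have "sqrt (2 * real N + 1) \<le> sqrt ((2 * s)\<^sup>2)" by (rule real_sqrt_le_mono)
    also have "\<dots> = 2 * s" using s1 by (simp only: real_sqrt_abs)
    finally show ?thesis .
  qed
  have i1: "b * sqrt (2 * real N + 1) \<le> b * (2 * s)" by (rule mult_left_mono[OF sq assms(2)])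
  have i2: "(a + 2 * b + 2) * s \<le> s * s" by (rule mult_right_mono[OF s0]) (use s1 in auto)
  have i3: "a * 1 \<le> a * s" by (rule mult_left_mono[OF s1 assms(1)])
  have i2': "a * s + 2 * (b * s) + 2 * s \<le> s * s" using i2 by (simp add: algebra_simps)
  have i1': "b * sqrt (2 * real N + 1) \<le> 2 * (b * s)" using i1 by (simp add: algebra_simps)
  have "a + b * sqrt (2 * real N + 1) < real N - 1" using i1' i2' i3 ss s1 by linarith
  then show ?thesis using N1 by blast
qed



definition Cst :: "real \<Rightarrow> ennreal \<Rightarrow> real \<Rightarrow> real" where
  "Cst T r K = (if r = top then K * T else T + K powr enn2real r)"

lemma Cst_nonneg: "0 < T \<Longrightarrow> 0 \<le> K \<Longrightarrow> 0 \<le> Cst T r K"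
  by (simp add: Cst_def)

lemma le_one_plus_powr: "0 \<le> (x::real) \<Longrightarrow> 1 \<le> p \<Longrightarrow> x \<le> 1 + x powr p"
proof (cases "x \<le> 1")
  case True then show ?thesis by (smt (verit) powr_ge_zero)
next
  case False
  assume "0 \<le> x" "1 \<le> p"
  then have "x powr 1 \<le> x powr p" using False by (intro powr_mono) auto
  then show ?thesis using False by simp
qed

lemma L1core:
  fixes G :: "real \<Rightarrow> real"
  assumes T: "0 < T" and r: "1 \<le> r" and K: "0 \<le> K" and Lr: "Lr_bound T r u K"
    and Gm: "G \<in> borel_measurable (restrict_space lborel {0<..<T})"
    and Gb: "AE t in lborel. t \<in> {0<..<T} \<longrightarrow> \<bar>G t\<bar> \<le> l2norm (extD (u t))"
  shows "(\<integral>\<^sup>+t. ennreal \<bar>G t\<bar> \<partial>restrict_space lborel {0<..<T}) \<le> ennreal (Cst T r K)"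
proof -
  let ?A = "{0<..<T}"
  let ?R = "restrict_space lborel ?A"
  have sA: "?A \<inter> space lborel \<in> sets lborel" by simp
  have GbR: "AE t in ?R. \<bar>G t\<bar> \<le> l2norm (extD (u t))"
    using Gb by (simp add: AE_restrict_space_iff[OF sA])
  have mR: "emeasure ?R (space ?R) = ennreal T"
    using T by (simp add: emeasure_restrict_space[OF sA] space_restrict_space)
  show ?thesis
  proof (cases "r = top")
    case True
    have "AE t in lborel. t \<in> ?A \<longrightarrow> l2norm (extD (u t)) \<le> K" using Lr True by (simp add: Lr_bound_def)
    then have "AE t in ?R. l2norm (extD (u t)) \<le> K" by (simp add: AE_restrict_space_iff[OF sA])
    with GbR have "AE t in ?R. ennreal \<bar>G t\<bar> \<le> ennreal K"
      by eventually_elim (simp add: ennreal_leI)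
    then have "(\<integral>\<^sup>+t. ennreal \<bar>G t\<bar> \<partial>?R) \<le> (\<integral>\<^sup>+t. ennreal K \<partial>?R)" by (rule nn_integral_mono_AE)
    also have "\<dots> = ennreal K * ennreal T" using mR by simp
    also have "\<dots> = ennreal (Cst T r K)" using True K T by (simp add: Cst_def ennreal_mult)
    finally show ?thesis .
  next
    case False
    define p where "p = enn2real r"
    have p1: "1 \<le> p" unfolding p_def using enn2real_mono[OF r] False by (simp add: top.not_eq_extremum)
    have Lr': "(\<integral>\<^sup>+t. ennreal (l2norm (extD (u t)) powr p) \<partial>?R) \<le> ennreal (K powr p)"
      using Lr False unfolding Lr_bound_def p_def by (simp add: nn_integral_restrict_space[OF sA])
    have "(\<integral>\<^sup>+t. ennreal \<bar>G t\<bar> \<partial>?R) \<le> (\<integral>\<^sup>+t. 1 + ennreal (\<bar>G t\<bar> powr p) \<partial>?R)"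
    proof (rule nn_integral_mono)
      fix t
      have "\<bar>G t\<bar> \<le> 1 + \<bar>G t\<bar> powr p" by (rule le_one_plus_powr[OF _ p1]) simp
      then show "ennreal \<bar>G t\<bar> \<le> 1 + ennreal (\<bar>G t\<bar> powr p)"
        by (metis ennreal_leI ennreal_plus ennreal_1 zero_le_one powr_ge_zero)
    qed
    also have "\<dots> = (\<integral>\<^sup>+t. 1 \<partial>?R) + (\<integral>\<^sup>+t. ennreal (\<bar>G t\<bar> powr p) \<partial>?R)"
      by (rule nn_integral_add) (use Gm in auto)
    also have "(\<integral>\<^sup>+t. 1 \<partial>?R) = ennreal T" using mR by simp
    also have "(\<integral>\<^sup>+t. ennreal (\<bar>G t\<bar> powr p) \<partial>?R) \<le> (\<integral>\<^sup>+t. ennreal (l2norm (extD (u t)) powr p) \<partial>?R)"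
    proof (rule nn_integral_mono_AE)
      show "AE t in ?R. ennreal (\<bar>G t\<bar> powr p) \<le> ennreal (l2norm (extD (u t)) powr p)"
        using GbR by eventually_elim (intro ennreal_leI powr_mono2, use p1 in auto)
    qed
    also note Lr'
    finally show ?thesis using False T K by (simp add: Cst_def p_def add_mono)
  qed
qed

lemma L1:
  fixes G :: "real \<Rightarrow> real"
  assumes T: "0 < T" and r: "1 \<le> r" and K: "0 \<le> K" and Lr: "Lr_bound T r u K"
    and Gm: "G \<in> borel_measurable (restrict_space lborel {0<..<T})"
    and c: "0 < c"
    and Gb: "AE t in lborel. t \<in> {0<..<T} \<longrightarrow> \<bar>G t\<bar> \<le> c * l2norm (extD (u t))"
  shows "integrable (restrict_space lborel {0<..<T}) G \<and>
         integral\<^sup>L (restrict_space lborel {0<..<T}) (\<lambda>t. \<bar>G t\<bar>) \<le> c * Cst T r K"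
proof -
  let ?R = "restrict_space lborel {0<..<T}"
  have Gm': "(\<lambda>t. G t / c) \<in> borel_measurable ?R" using Gm by measurable
  have "AE t in lborel. t \<in> {0<..<T} \<longrightarrow> \<bar>G t / c\<bar> \<le> l2norm (extD (u t))"
    using Gb by eventually_elim (use c in \<open>auto simp: field_simps\<close>)
  note core = L1core[OF T r K Lr Gm' this]
  have "(\<integral>\<^sup>+t. ennreal \<bar>G t\<bar> \<partial>?R) = (\<integral>\<^sup>+t. ennreal c * ennreal \<bar>G t / c\<bar> \<partial>?R)"
    using c by (intro nn_integral_cong) (simp add: ennreal_mult[symmetric] abs_divide)
  also have "\<dots> = ennreal c * (\<integral>\<^sup>+t. ennreal \<bar>G t / c\<bar> \<partial>?R)"
    by (rule nn_integral_cmult) (use Gm' in measurable)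
  also have "\<dots> \<le> ennreal c * ennreal (Cst T r K)" by (rule mult_left_mono[OF core]) simp
  also have "\<dots> = ennreal (c * Cst T r K)" using c Cst_nonneg[OF T K] by (simp add: ennreal_mult)
  finally have bnd: "(\<integral>\<^sup>+t. ennreal \<bar>G t\<bar> \<partial>?R) \<le> ennreal (c * Cst T r K)" .
  have int: "integrable ?R G"
    unfolding integrable_iff_bounded using Gm bnd by (simp add: le_less_trans)
  have "integral\<^sup>L ?R (\<lambda>t. \<bar>G t\<bar>) = enn2real (\<integral>\<^sup>+t. ennreal \<bar>G t\<bar> \<partial>?R)"
    by (rule integral_eq_nn_integral) (use Gm in auto)
  also have "\<dots> \<le> c * Cst T r K"
    by (rule enn2real_leI[OF _ bnd]) (use c Cst_nonneg[OF T K] in simp)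
  finally show ?thesis using int by simp
qed

lemma L3:
  fixes F :: "real \<Rightarrow> real"
  assumes T: "0 < T" and Fm: "F \<in> borel_measurable (restrict_space lborel {0<..<T})"
  shows "(LINT \<tau>:{0..T}|lborel. F \<tau>) = integral\<^sup>L (restrict_space lborel {0<..<T}) F"
proof -
  have sA: "{0<..<T} \<inter> space lborel \<in> sets lborel" by simp
  have m1: "(\<lambda>x. indicator {0<..<T} x *\<^sub>R F x) \<in> borel_measurable lborel"
    using Fm borel_measurable_restrict_space_iff[OF sA, of F] by simp
  have eq: "indicator {0..T} x *\<^sub>R F x =
      indicator {0<..<T} x *\<^sub>R F x + indicator {0} x * F 0 + indicator {T} x * F T" for x
    using T by (auto split: split_indicator)
  have m2: "(\<lambda>x. indicator {0..T} x *\<^sub>R F x) \<in> borel_measurable lborel"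
    unfolding eq using m1 by measurable
  have ae: "AE x in lborel. x \<notin> {0, T}"
    by (rule AE_not_in) (simp add: finite_imp_null_set_lborel)
  have "(LINT \<tau>:{0..T}|lborel. F \<tau>) = integral\<^sup>L lborel (\<lambda>x. indicator {0<..<T} x *\<^sub>R F x)"
    unfolding set_lebesgue_integral_def
    by (rule integral_cong_AE[OF m2 m1]) (use ae in eventually_elim, auto split: split_indicator)
  also have "\<dots> = integral\<^sup>L (restrict_space lborel {0<..<T}) F"
    by (rule integral_restrict_space[OF sA, symmetric])
  finally show ?thesis .
qed

lemma Hop_meas:
  assumes "\<And>y. (\<lambda>t. u t y) \<in> borel_measurable M"
  shows "(\<lambda>t. (Hop ^^ n) (extD (u t)) x) \<in> borel_measurable M"
proof (induction n arbitrary: x)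
  case 0
  show ?case by (cases "x \<in> D") (simp_all add: extD_def assms)
next
  case (Suc n)
  have e: "(\<lambda>t. (Hop ^^ Suc n) (extD (u t)) x) = (\<lambda>t. 2 * (Hop ^^ n) (extD (u t)) x
     - (Hop ^^ n) (extD (u t)) (x - 1) - (Hop ^^ n) (extD (u t)) (x + 1))"
    by (simp add: Hop_def)
  show ?case unfolding e using Suc by measurable
qed

lemma S_meas:
  assumes "\<And>y. (\<lambda>t. u t y) \<in> borel_measurable M" and "s \<in> borel_measurable M"
  shows "(\<lambda>t. S (s t) (extD (u t)) x) \<in> borel_measurable M"
  unfolding S_def
proof (rule borel_measurable_suminf)
  fix n
  show "(\<lambda>t. (- s t) ^ n / fact n * (Hop ^^ n) (extD (u t)) x) \<in> borel_measurable M"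
    using Hop_meas[OF assms(1), where n=n and x=x] assms(2) by measurable
qed



theorem mainTheorem4:
  fixes T K :: real and r :: ennreal
  assumes "T > 0" and "1 \<le> r" and "K \<ge> 0"
  shows "\<not> controllable 0 T r K"
proof
  assume "controllable 0 T r K"
  then obtain u where adm: "admissible T u" and Lr0: "Lr_bound T r u (K * l2norm delta1)"
    and ml2: "mild T delta1 u \<in> l2" and mn: "l2norm (mild T delta1 u) \<le> 0 * l2norm delta1"
    unfolding controllable_def using delta1_l2 by blast
  have T: "0 < T" and r: "1 \<le> r" and K: "0 \<le> K" using assms by auto
  have Lr: "Lr_bound T r u K" using Lr0 by (simp add: delta1_norm)
  have mz: "mild T delta1 u x = 0" for x
    using l2_point_le[OF ml2, of x] mn by simp
  let ?A = "{0<..<T}"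
  let ?R = "restrict_space lborel ?A"
  have um: "(\<lambda>t. u t y) \<in> borel_measurable ?R" for y using adm by (simp add: admissible_def)
  have ael2: "AE t in lborel. t \<in> ?A \<longrightarrow> extD (u t) \<in> l2" using adm by (simp add: admissible_def)
  define F where "F x t = S (T - t) (extD (u t)) x" for x t
  have sm: "(\<lambda>t. T - t) \<in> borel_measurable ?R"
    by (rule measurable_restrict_space1) simp
  have Fm: "F x \<in> borel_measurable ?R" for x
    unfolding F_def[abs_def] by (rule S_meas[OF um sm])
  have Fb: "AE t in lborel. t \<in> ?A \<longrightarrow> \<bar>F x t\<bar> \<le> exp (4 * T) * l2norm (extD (u t))" for x
    using ael2
  proof eventually_elim
    case (elim t)
    show ?case
    proof
      assume tA: "t \<in> ?A"
      with elim have w: "extD (u t) \<in> l2" by simp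
      have "\<bar>F x t\<bar> \<le> l2norm (extD (u t)) * exp (4 * \<bar>T - t\<bar>)"
        unfolding F_def using S_bound[of "extD (u t)" "l2norm (extD (u t))" "T - t" x] l2_point_le[OF w] by blast
      also have "\<dots> \<le> l2norm (extD (u t)) * exp (4 * T)"
        using tA by (intro mult_left_mono l2norm_nonneg) auto
      finally show "\<bar>F x t\<bar> \<le> exp (4 * T) * l2norm (extD (u t))" by (simp add: mult.commute)
    qed
  qed
  have Fi: "integrable ?R (F x)" for x
    using L1[OF T r K Lr Fm exp_gt_zero Fb] by blast
  define C where "C = Cst T r K"
  have C0: "0 \<le> C" unfolding C_def using Cst_nonneg[OF T K] .
  define a where "a = 2 * exp (7 * T)"
  define b where "b = 2 * exp (12 * T) * C"
  obtain N :: nat where N1: "1 \<le> N" and Nbig: "a + b * sqrt (2 * real N + 1) < real N - 1"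
    using numeric[of a b] C0 by (auto simp: a_def b_def)
  define W where "W = {-int N..int N}"
  define G where "G t = (\<Sum>x\<in>W. gN N x * F x t)" for t
  define \<beta> where "\<beta> = 2 * sqrt (2 * real N + 1) * exp (10 * T)"
  have \<beta>0: "0 < \<beta>" unfolding \<beta>_def by simp
  have Gm: "G \<in> borel_measurable ?R"
    unfolding G_def[abs_def] using Fm by measurable
  have Gb: "AE t in lborel. t \<in> ?A \<longrightarrow> \<bar>G t\<bar> \<le> \<beta> * l2norm (extD (u t))"
    using ael2
  proof eventually_elim
    case (elim t)
    show ?case
    proof
      assume tA: "t \<in> ?A"
      with elim have w: "extD (u t) \<in> l2" by simp
      have hodd: "odd y \<Longrightarrow> extD (u t) y = 0" for y by (simp add: extD_def D_def)
      have "\<bar>G t\<bar> \<le> (2 * sqrt (2 * real N + 1) * l2norm (extD (u t))) * exp (10 * \<bar>T - t\<bar>)"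
        unfolding G_def W_def F_def
        by (rule pairing_D[OF l2_point_le[OF w] hodd]) (auto simp: l2_finite_le[OF w] l2norm_nonneg)
      also have "\<dots> \<le> (2 * sqrt (2 * real N + 1) * l2norm (extD (u t))) * exp (10 * T)"
        using tA by (intro mult_left_mono mult_nonneg_nonneg l2norm_nonneg) auto
      finally show "\<bar>G t\<bar> \<le> \<beta> * l2norm (extD (u t))" by (simp add: \<beta>_def algebra_simps)
    qed
  qed
  have GL: "integrable ?R G \<and> integral\<^sup>L ?R (\<lambda>t. \<bar>G t\<bar>) \<le> \<beta> * C"
    unfolding C_def by (rule L1[OF T r K Lr Gm \<beta>0 Gb])
  define P where "P = (\<Sum>x\<in>W. gN N x * S T delta1 x)"
  have "0 = (\<Sum>x\<in>W. gN N x * mild T delta1 u x)" by (simp add: mz)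
  also have "\<dots> = (\<Sum>x\<in>W. gN N x * S T delta1 x + gN N x * integral\<^sup>L ?R (F x))"
    by (intro sum.cong refl) (simp add: mild_def F_def[symmetric] L3[OF T Fm] algebra_simps)
  also have "\<dots> = P + (\<Sum>x\<in>W. integral\<^sup>L ?R (\<lambda>t. gN N x * F x t))"
    by (simp add: P_def sum.distrib)
  also have "(\<Sum>x\<in>W. integral\<^sup>L ?R (\<lambda>t. gN N x * F x t)) = integral\<^sup>L ?R G"
    unfolding G_def by (rule Bochner_Integration.integral_sum[where f="\<lambda>x t. gN N x * F x t", symmetric]) (use Fi in auto)
  finally have PG: "P = - integral\<^sup>L ?R G" by linarith
  have "\<bar>P\<bar> \<le> integral\<^sup>L ?R (\<lambda>t. \<bar>G t\<bar>)" using PG integral_abs_bound[of ?R G] by simp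
  also have "\<dots> \<le> \<beta> * C" using GL by blast
  finally have Pup: "P \<le> \<beta> * C" by linarith
  have Plow: "(real N - 1) * exp (-2 * T) - 2 * exp (5 * T) \<le> P"
    unfolding P_def W_def using pairing_delta[OF N1] T by simp
  have "exp (2 * T) * ((real N - 1) * exp (-2 * T) - 2 * exp (5 * T)) \<le> exp (2 * T) * (\<beta> * C)"
    using Plow Pup by (intro mult_left_mono) auto
  moreover have "exp (2 * T) * ((real N - 1) * exp (-2 * T) - 2 * exp (5 * T)) = real N - 1 - a"
    by (simp add: a_def algebra_simps mult_exp_exp)
  moreover have "exp (2 * T) * (\<beta> * C) = b * sqrt (2 * real N + 1)"
    by (simp add: b_def \<beta>_def algebra_simps mult_exp_exp)
  ultimately show False using Nbig by linarith
qed

end
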